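(* Let $X$ be an analytic planar vector field having an isochronous center, with a first integral $H$, and suppose there exists a differentiable linearization $L$ (a local diffeomorphism defined in a neighborhood of the center) conjugating $X$ with the linear vector field $X_L=-\omega v\frac{\partial}{\partial u}+\omega u\frac{\partial}{\partial v}$, $\omega>0$, i.e. $X_L(u,v)=\left(DL\cdot X\right)|_{L^{-1}(u,v)}$. For $\epsilon\in\mathbb{R}$ let $$\Phi_{L,\epsilon}(u,v)=\left(\frac{(1-\epsilon^{2}\omega^{2})u-2\epsilon\omega v}{\epsilon^{2}\omega^{2}+1},\ \frac{2\epsilon\omega u+(1-\epsilon^{2}\omega^{2})v}{\epsilon^{2}\omega^{2}+1}\right)$$ and let $\widetilde{\Phi}_\epsilon=L^{-1}\circ\Phi_{L,\epsilon}\circ L$ (the pseudo-KHK map of $X$). Then: (a) $X$ is a Lie symmetry of $\widetilde{\Phi}_\epsilon$; (b) $H$ is a first integral of $\widetilde{\Phi}_\epsilon$ (as it is of $X$); (c) on each closed curve $C_h=\{H=h\}$ contained in the domain of definition of $L$, the restriction $\widetilde{\Phi}_\epsilon|_{C_h}$ is conjugate to a rotation, and for any fixed $\epsilon$ the rotation number $\rho_\epsilon(h)$ is constant (independent of $h$); (d) $\widetilde{\Phi}_\epsilon$ preserves a measure absolutely continuous with respect to the Lebesgue measure.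
   Context: An isochronous center is a singular point surrounded by periodic orbits all having the same period. A function $H$ is a first integral of a map $F$ if $H\circ F=H$. A vector field $X$ is a Lie symmetry of a map $F$ if $X(F(\mathbf{x}))=DF(\mathbf{x})\,X(\mathbf{x})$. $\Phi_{L,\epsilon}$ is the KHK map of $X_L$. *)

theory Defs
  imports "HOL-Analysis.Analysis"
begin

definition real_analytic2 :: "(real \<times> real \<Rightarrow> real) \<Rightarrow> (real \<times> real) set \<Rightarrow> bool" where
  "real_analytic2 g U \<longleftrightarrow>
     (\<forall>p\<in>U. \<exists>r>0. \<exists>a :: nat \<Rightarrow> nat \<Rightarrow> real. \<forall>h. norm h < r \<longrightarrow>
        ((\<lambda>(i,j). a i j * fst h ^ i * snd h ^ j) has_sum g (p + h)) UNIV)"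

definition analytic_field :: "(real \<times> real \<Rightarrow> real \<times> real) \<Rightarrow> (real \<times> real) set \<Rightarrow> bool" where
  "analytic_field X U \<longleftrightarrow> real_analytic2 (\<lambda>x. fst (X x)) U \<and> real_analytic2 (\<lambda>x. snd (X x)) U"

definition isochronous_center :: "(real \<times> real \<Rightarrow> real \<times> real) \<Rightarrow> (real \<times> real) set \<Rightarrow> real \<times> real \<Rightarrow> bool" where
  "isochronous_center X U p \<longleftrightarrow> p \<in> U \<and> X p = 0 \<and>
     (\<exists>N T. open N \<and> p \<in> N \<and> N \<subseteq> U \<and> T > 0 \<and>
        (\<forall>q\<in>N - {p}. \<exists>x :: real \<Rightarrow> real \<times> real. x 0 = q \<and>
            (\<forall>t. x t \<in> U \<and> (x has_vector_derivative X (x t)) (at t)) \<and>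
            (\<forall>t. x (t + T) = x t) \<and> (\<forall>s. 0 < s \<and> s < T \<longrightarrow> x s \<noteq> q)))"

definition first_integral_field :: "(real \<times> real \<Rightarrow> real) \<Rightarrow> (real \<times> real \<Rightarrow> real \<times> real) \<Rightarrow> (real \<times> real) set \<Rightarrow> bool" where
  "first_integral_field H X U \<longleftrightarrow>
     (\<forall>(x :: real \<Rightarrow> real \<times> real) a b. a \<le> b \<longrightarrow>
        (\<forall>t\<in>{a..b}. x t \<in> U \<and> (x has_vector_derivative X (x t)) (at t within {a..b})) \<longrightarrow>
        H (x a) = H (x b))"

definition local_diffeo :: "(real \<times> real \<Rightarrow> real \<times> real) \<Rightarrow> (real \<times> real) set \<Rightarrow> bool" where
  "local_diffeo L V \<longleftrightarrow> open V \<and> L differentiable_on V \<and> inj_on L V \<and> open (L ` V) \<and>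
     (the_inv_into V L) differentiable_on (L ` V)"

definition XL :: "real \<Rightarrow> real \<times> real \<Rightarrow> real \<times> real" where
  "XL \<omega> uv = (- \<omega> * snd uv, \<omega> * fst uv)"

definition Phi_L :: "real \<Rightarrow> real \<Rightarrow> real \<times> real \<Rightarrow> real \<times> real" where
  "Phi_L \<omega> \<epsilon> uv = (((1 - \<epsilon>^2 * \<omega>^2) * fst uv - 2 * \<epsilon> * \<omega> * snd uv) / (\<epsilon>^2 * \<omega>^2 + 1),
                     (2 * \<epsilon> * \<omega> * fst uv + (1 - \<epsilon>^2 * \<omega>^2) * snd uv) / (\<epsilon>^2 * \<omega>^2 + 1))"

definition pseudo_khk :: "(real \<times> real \<Rightarrow> real \<times> real) \<Rightarrow> (real \<times> real) set \<Rightarrow> real \<Rightarrow> real \<Rightarrow> real \<times> real \<Rightarrow> real \<times> real" where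
  "pseudo_khk L V \<omega> \<epsilon> = the_inv_into V L \<circ> Phi_L \<omega> \<epsilon> \<circ> L"

text \<open>Region where the pseudo-KHK map is considered: points of V whose whole L-image circle
  (an orbit of X_L) lies in L(V), i.e. the union of the closed orbits contained in the domain of L.\<close>
definition khk_domain :: "(real \<times> real \<Rightarrow> real \<times> real) \<Rightarrow> (real \<times> real) set \<Rightarrow> (real \<times> real) set" where
  "khk_domain L V = {x \<in> V. \<forall>y. norm y = norm (L x) \<longrightarrow> y \<in> L ` V}"

definition rot :: "real \<Rightarrow> real \<times> real \<Rightarrow> real \<times> real" where
  "rot a uv = (cos a * fst uv - sin a * snd uv, sin a * fst uv + cos a * snd uv)"

definition closed_curve :: "(real \<times> real) set \<Rightarrow> bool" where
  "closed_curve C \<longleftrightarrow> (\<exists>g. simple_path g \<and> pathfinish g = pathstart g \<and> path_image g = C)"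

end

theory Submission
  imports Defs
begin



lemma rot_add: "rot s (rot t y) = rot (s + t) y"
  by (simp add: rot_def cos_add sin_add algebra_simps)

lemma rot_0[simp]: "rot 0 y = y"
  by (simp add: rot_def)

lemma norm_rot[simp]: "norm (rot t y) = norm y"
proof -
  have "(cos t * fst y - sin t * snd y)\<^sup>2 + (sin t * fst y + cos t * snd y)\<^sup>2
        = (fst y)\<^sup>2 + (snd y)\<^sup>2"
  proof -
    have gen: "(c * a - s * b)\<^sup>2 + (s * a + c * b)\<^sup>2 = (s\<^sup>2 + c\<^sup>2) * (a\<^sup>2 + b\<^sup>2)" for a b c s :: real
      by (simp add: power2_eq_square algebra_simps)
    have "(cos t * fst y - sin t * snd y)\<^sup>2 + (sin t * fst y + cos t * snd y)\<^sup>2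
        = ((sin t)\<^sup>2 + (cos t)\<^sup>2) * ((fst y)\<^sup>2 + (snd y)\<^sup>2)"
      by (rule gen)
    then show ?thesis by (simp only: sin_cos_squared_add mult_1)
  qed
  then show ?thesis
    by (simp add: rot_def norm_prod_def)
qed

lemma linear_rot: "linear (rot t)"
  by (rule linearI) (auto simp: rot_def algebra_simps)

lemma continuous_rot_t: "continuous_on S (\<lambda>t. rot t y)"
  unfolding rot_def by (intro continuous_intros)

lemma rot_has_vector_derivative:
  "((\<lambda>s. rot (\<omega> * s) y) has_vector_derivative XL \<omega> (rot (\<omega> * s) y)) (at s within S)"
  unfolding rot_def XL_def
  apply (rule has_vector_derivative_Pair)
  apply (simp_all flip: has_real_derivative_iff_has_vector_derivative)
  apply (auto intro!: derivative_eq_intros simp: algebra_simps)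
  done

lemma XL_rot: "XL \<omega> (rot t y) = rot t (XL \<omega> y)"
  by (simp add: XL_def rot_def algebra_simps)

lemma Phi_L_rot: "Phi_L \<omega> \<epsilon> y = rot (2 * arctan (\<epsilon> * \<omega>)) y"
proof -
  define a where "a = \<epsilon> * \<omega>"
  have s: "sqrt (1 + a\<^sup>2) ^ 2 = 1 + a\<^sup>2" by simp
  have c2: "cos (2 * arctan a) = (1 - a\<^sup>2) / (a\<^sup>2 + 1)"
    unfolding cos_double cos_arctan sin_arctan
    by (simp add: power_divide s diff_divide_distrib[symmetric] add_divide_distrib[symmetric])
  have s2: "sin (2 * arctan a) = 2 * a / (a\<^sup>2 + 1)"
    unfolding sin_double cos_arctan sin_arctan
    by (simp add: s field_simps power2_eq_square[symmetric])
  show ?thesis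
    unfolding Phi_L_def rot_def c2[unfolded a_def] s2[unfolded a_def]
    by (simp add: a_def power_mult_distrib add_divide_distrib diff_divide_distrib field_simps)
qed

lemma rot_surj:
  fixes y z :: "real \<times> real"
  assumes "norm z = norm y"
  shows "\<exists>t. z = rot t y"
proof (cases "y = 0")
  case True
  then show ?thesis using assms by (auto intro!: exI[of _ 0])
next
  case False
  define n where "n = (fst y)\<^sup>2 + (snd y)\<^sup>2"
  have n: "n > 0" using False by (auto simp: n_def prod_eq_iff add_pos_nonneg sum_power2_gt_zero_iff)
  have nz: "(fst z)\<^sup>2 + (snd z)\<^sup>2 = n"
    using assms by (simp add: norm_prod_def n_def)
  define c where "c = (fst y * fst z + snd y * snd z) / n"
  define s where "s = (fst y * snd z - snd y * fst z) / n"
  have lag: "(fst y * fst z + snd y * snd z)\<^sup>2 + (fst y * snd z - snd y * fst z)\<^sup>2 = ((fst y)\<^sup>2 + (snd y)\<^sup>2) * ((fst z)\<^sup>2 + (snd z)\<^sup>2)"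
    by (simp add: power2_eq_square algebra_simps)
  have "c\<^sup>2 + s\<^sup>2 = ((fst y)\<^sup>2 + (snd y)\<^sup>2) * ((fst z)\<^sup>2 + (snd z)\<^sup>2) / n\<^sup>2"
    unfolding c_def s_def power_divide add_divide_distrib[symmetric] lag ..
  also have "\<dots> = 1"
  proof -
    have ny: "(fst y)\<^sup>2 + (snd y)\<^sup>2 = n" by (simp add: n_def)
    show ?thesis unfolding ny nz using n by (simp add: power2_eq_square)
  qed
  finally obtain t where t: "c = cos t" "s = sin t"
    using sincos_total_2pi by metis
  have cn: "c * n = fst y * fst z + snd y * snd z" using n by (simp add: c_def)
  have sn: "s * n = fst y * snd z - snd y * fst z" using n by (simp add: s_def)
  have "(c * fst y - s * snd y) * n = (c * n) * fst y - (s * n) * snd y" by (simp add: algebra_simps)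
  also have "\<dots> = (fst y * fst z + snd y * snd z) * fst y - (fst y * snd z - snd y * fst z) * snd y"
    by (simp only: cn sn)
  also have "\<dots> = fst z * n" unfolding n_def by (simp add: power2_eq_square algebra_simps)
  finally have e1: "c * fst y - s * snd y = fst z" using n by simp
  have "(s * fst y + c * snd y) * n = (s * n) * fst y + (c * n) * snd y" by (simp add: algebra_simps)
  also have "\<dots> = (fst y * snd z - snd y * fst z) * fst y + (fst y * fst z + snd y * snd z) * snd y"
    by (simp only: cn sn)
  also have "\<dots> = snd z * n" unfolding n_def by (simp add: power2_eq_square algebra_simps)
  finally have e2: "s * fst y + c * snd y = snd z" using n by simp
  have "z = rot t y"
    unfolding rot_def t[symmetric] using e1 e2 by (simp add: prod_eq_iff)
  then show ?thesis by blast
qed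



locale khk_setting =
  fixes X :: "real \<times> real \<Rightarrow> real \<times> real"
    and H :: "real \<times> real \<Rightarrow> real"
    and L :: "real \<times> real \<Rightarrow> real \<times> real"
    and DL :: "real \<times> real \<Rightarrow> real \<times> real \<Rightarrow> real \<times> real"
    and U V :: "(real \<times> real) set" and \<omega> :: real
  assumes fi: "first_integral_field H X U" and om: "\<omega> > 0" and VU: "V \<subseteq> U"
    and ld: "local_diffeo L V"
    and der: "\<forall>x\<in>V. (L has_derivative DL x) (at x) \<and> XL \<omega> (L x) = DL x (X x)"
begin

definition "Li = the_inv_into V L"
definition "W = L ` V"

lemma openV: "open V" using ld by (simp add: local_diffeo_def)
lemma openW: "open W" using ld by (simp add: local_diffeo_def W_def)
lemma injL: "inj_on L V" using ld by (simp add: local_diffeo_def)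
lemma Li_L[simp]: "x \<in> V \<Longrightarrow> Li (L x) = x"
  unfolding Li_def by (simp add: the_inv_into_f_f injL)
lemma L_Li[simp]: "w \<in> W \<Longrightarrow> L (Li w) = w"
  unfolding Li_def W_def by (simp add: f_the_inv_into_f injL)
lemma Li_in: "w \<in> W \<Longrightarrow> Li w \<in> V"
  unfolding Li_def W_def by (simp add: the_inv_into_into injL)
lemma L_in: "x \<in> V \<Longrightarrow> L x \<in> W" unfolding W_def by simp
lemma Li_inj: "inj_on Li W"
  unfolding Li_def W_def by (simp add: inj_on_the_inv_into injL)
lemma diffL: "L differentiable_on V" using ld by (simp add: local_diffeo_def)
lemma diffLi: "Li differentiable_on W" using ld by (simp add: local_diffeo_def Li_def W_def)
lemma contL: "continuous_on V L" by (rule differentiable_imp_continuous_on[OF diffL])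
lemma contLi: "continuous_on W Li" by (rule differentiable_imp_continuous_on[OF diffLi])

lemma Li_deriv_ex:
  assumes w: "w \<in> W" shows "\<exists>D. (Li has_derivative D) (at w)"
proof -
  have "Li differentiable (at w within W)" using diffLi w by (simp add: differentiable_on_def)
  then have "Li differentiable (at w)" using at_within_open[OF w openW] by simp
  then show ?thesis by (simp add: differentiable_def)
qed

lemma Li_deriv_X:
  assumes w: "w \<in> W" and D: "(Li has_derivative D) (at w)"
  shows "D (XL \<omega> w) = X (Li w)"
proof -
  define z where "z = Li w"
  have z: "z \<in> V" "L z = w" using w by (auto simp: z_def Li_in)
  have dL: "(L has_derivative DL z) (at z)" and xl: "XL \<omega> (L z) = DL z (X z)"
    using der z by auto
  have "((Li \<circ> L) has_derivative (D \<circ> DL z)) (at z)"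
    using diff_chain_at[OF dL] D z by simp
  moreover have "((Li \<circ> L) has_derivative (\<lambda>h. h)) (at z)"
  proof (rule has_derivative_transform_within_open[OF has_derivative_ident openV z(1)])
    show "\<And>x. x \<in> V \<Longrightarrow> x = (Li \<circ> L) x" by simp
  qed
  ultimately have "D \<circ> DL z = (\<lambda>h. h)" by (rule has_derivative_unique)
  then have "D (DL z (X z)) = X z" by (metis comp_apply)
  then show ?thesis using xl z by (simp add: z_def)
qed

lemma flow:
  assumes ab: "a \<le> b" and inW: "\<forall>t\<in>{a..b}. rot t y \<in> W"
  shows "H (Li (rot a y)) = H (Li (rot b y))"
proof -
  define x where "x = (\<lambda>s. Li (rot (\<omega> * s) y))"
  have ab': "a / \<omega> \<le> b / \<omega>" using ab om by (simp add: divide_right_mono)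
  have "\<forall>t\<in>{a/\<omega>..b/\<omega>}. x t \<in> U \<and> (x has_vector_derivative X (x t)) (at t within {a/\<omega>..b/\<omega>})"
  proof
    fix t assume t: "t \<in> {a/\<omega>..b/\<omega>}"
    have "\<omega> * t \<in> {a..b}" using t om by (auto simp: field_simps)
    then have w: "rot (\<omega> * t) y \<in> W" using inW by auto
    then have "x t \<in> U" using Li_in[OF w] VU by (auto simp: x_def)
    moreover
    obtain D where D: "(Li has_derivative D) (at (rot (\<omega> * t) y))" using Li_deriv_ex w by blast
    have "(Li \<circ> (\<lambda>s. rot (\<omega> * s) y) has_vector_derivative D (XL \<omega> (rot (\<omega> * t) y))) (at t within {a/\<omega>..b/\<omega>})"
      by (rule vector_derivative_diff_chain_within[OF rot_has_vector_derivative])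
         (rule has_derivative_at_withinI[OF D])
    then have "(x has_vector_derivative X (x t)) (at t within {a/\<omega>..b/\<omega>})"
      using Li_deriv_X[OF w D] by (simp add: x_def o_def)
    ultimately show "x t \<in> U \<and> (x has_vector_derivative X (x t)) (at t within {a/\<omega>..b/\<omega>})" by blast
  qed
  then have "H (x (a/\<omega>)) = H (x (b/\<omega>))"
    using fi ab' unfolding first_integral_field_def by blast
  then show ?thesis using om by (simp add: x_def)
qed

lemma flow_seg:
  assumes inW: "\<forall>t\<in>closed_segment a b. rot t y \<in> W"
  shows "H (Li (rot a y)) = H (Li (rot b y))"
proof (cases "a \<le> b")
  case True
  then have "\<forall>t\<in>{a..b}. rot t y \<in> W" using inW by (simp add: closed_segment_eq_real_ivl)
  then show ?thesis by (rule flow[OF True])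
next
  case False
  then have ba: "b \<le> a" by simp
  then have "\<forall>t\<in>{b..a}. rot t y \<in> W" using inW False by (simp add: closed_segment_eq_real_ivl)
  then show ?thesis by (rule flow[OF ba, symmetric])
qed

end


context khk_setting begin

definition "\<theta> \<epsilon> = 2 * arctan (\<epsilon> * \<omega>)"

lemma Phi_eq: "Phi_L \<omega> \<epsilon> = rot (\<theta> \<epsilon>)"
  by (rule ext) (simp add: Phi_L_rot \<theta>_def)

lemma F_eq: "pseudo_khk L V \<omega> \<epsilon> = Li \<circ> rot (\<theta> \<epsilon>) \<circ> L"
  by (simp add: pseudo_khk_def Phi_eq Li_def)

lemma khk_circle:
  assumes "x \<in> khk_domain L V" shows "rot t (L x) \<in> W"
proof -
  have "\<forall>y. norm y = norm (L x) \<longrightarrow> y \<in> L ` V" using assms by (simp add: khk_domain_def)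
  then show ?thesis unfolding W_def using norm_rot by blast
qed

lemma khk_V: "x \<in> khk_domain L V \<Longrightarrow> x \<in> V"
  by (auto simp: khk_domain_def)

lemma partA:
  assumes x: "x \<in> khk_domain L V"
  shows "\<exists>DF. (pseudo_khk L V \<omega> \<epsilon> has_derivative DF) (at x) \<and> X (pseudo_khk L V \<omega> \<epsilon> x) = DF (X x)"
proof -
  let ?R = "rot (\<theta> \<epsilon>)"
  have xV: "x \<in> V" using khk_V[OF x] .
  have w: "?R (L x) \<in> W" using khk_circle[OF x] .
  obtain D where D: "(Li has_derivative D) (at (?R (L x)))" using Li_deriv_ex[OF w] by blast
  have dL: "(L has_derivative DL x) (at x)" and xl: "XL \<omega> (L x) = DL x (X x)" using der xV by auto
  have dR: "(?R has_derivative ?R) (at (L x))"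
    using linear_rot by (simp add: bounded_linear_imp_has_derivative linear_linear)
  have "((Li \<circ> (?R \<circ> L)) has_derivative (D \<circ> (?R \<circ> DL x))) (at x)"
    by (rule diff_chain_at[OF diff_chain_at[OF dL dR]]) (simp add: D)
  moreover have "X (pseudo_khk L V \<omega> \<epsilon> x) = (D \<circ> (?R \<circ> DL x)) (X x)"
    using Li_deriv_X[OF w D] xl[symmetric] by (simp add: F_eq XL_rot)
  ultimately show ?thesis by (auto simp: F_eq o_assoc)
qed

lemma partB:
  assumes x: "x \<in> khk_domain L V"
  shows "H (pseudo_khk L V \<omega> \<epsilon> x) = H x"
proof -
  have "H (Li (rot 0 (L x))) = H (Li (rot (\<theta> \<epsilon>) (L x)))"
    by (rule flow_seg) (simp add: khk_circle[OF x])
  then show ?thesis using khk_V[OF x] by (simp add: F_eq)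
qed

end


lemma circle_fill:
  fixes f :: "real \<times> real \<Rightarrow> 'b::real_normed_vector"
  assumes hom: "K homeomorphic sphere (0::complex) 1"
    and contf: "continuous_on (sphere 0 1) f" and injf: "inj_on f (sphere 0 1)"
    and fim: "f ` sphere 0 1 \<subseteq> K"
  shows "f ` sphere 0 1 = K"
proof (rule ccontr)
  assume "f ` sphere 0 1 \<noteq> K"
  then obtain q where q: "q \<in> K" "q \<notin> f ` sphere 0 1" using fim by blast
  obtain h k where hk: "homeomorphism K (sphere (0::complex) 1) h k"
    using hom by (auto simp: homeomorphic_def)
  have hK: "h ` K = sphere 0 1" and khK: "\<forall>x\<in>K. k (h x) = x" and conth: "continuous_on K h"
    using hk unfolding homeomorphism_def by blast+
  have gS: "g ` (sphere 0 1 - {h q}) = {x::complex. \<i> \<bullet> x = 0}"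
    and g'g: "\<forall>x\<in>sphere 0 1 - {h q}. g' (g x) = x" and contg: "continuous_on (sphere 0 1 - {h q}) g"
    if "homeomorphism (sphere (0::complex) 1 - {h q}) {x::complex. \<i> \<bullet> x = 0} g g'" for g g'
    using that unfolding homeomorphism_def by blast+
  have hq: "h q \<in> sphere 0 1" using hK q(1) by blast
  have "(sphere (0::complex) 1 - {h q}) homeomorphic {x::complex. \<i> \<bullet> x = 0}"
    by (rule homeomorphic_punctured_sphere_hyperplane) (use hq in auto)
  then obtain g g' where gg: "homeomorphism (sphere (0::complex) 1 - {h q}) {x::complex. \<i> \<bullet> x = 0} g g'"
    by (auto simp: homeomorphic_def)
  define e where "e = (\<lambda>z. Re (g (h (f z))))"
  have hf_in: "h (f z) \<in> sphere 0 1 - {h q}" if z: "z \<in> sphere 0 1" for z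
  proof -
    have fz: "f z \<in> K" using fim z by auto
    have "h (f z) \<noteq> h q"
    proof
      assume "h (f z) = h q"
      then have "k (h (f z)) = k (h q)" by simp
      then have "f z = q" using khK fz q(1) by metis
      then show False using q(2) z by auto
    qed
    moreover have "h (f z) \<in> sphere 0 1" using hK fz by blast
    ultimately show ?thesis by blast
  qed
  note contg = contg[OF gg]
  have "continuous_on (sphere 0 1) (h \<circ> f)"
    by (rule continuous_on_compose[OF contf continuous_on_subset[OF conth fim]])
  then have "continuous_on (sphere 0 1) (g \<circ> (h \<circ> f))"
    by (rule continuous_on_compose) (rule continuous_on_subset[OF contg], use hf_in in auto)
  then have conte: "continuous_on (sphere 0 1) e"
    unfolding e_def using continuous_on_Re by (simp add: o_def)
  have inje: "inj_on e (sphere 0 1)"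
  proof (rule inj_onI)
    fix z1 z2 assume z: "z1 \<in> sphere 0 1" "z2 \<in> sphere 0 1" and eq: "e z1 = e z2"
    have gim: "g ` (sphere 0 1 - {h q}) = {x::complex. \<i> \<bullet> x = 0}"
      by (rule gS[OF gg])
    have T: "g (h (f z1)) \<in> {x::complex. \<i> \<bullet> x = 0}" "g (h (f z2)) \<in> {x::complex. \<i> \<bullet> x = 0}"
      using hf_in[OF z(1)] hf_in[OF z(2)] gim by blast+
    have "g (h (f z1)) = g (h (f z2))"
      using T eq by (auto simp: e_def complex_eq_iff inner_complex_def)
    then have "g' (g (h (f z1))) = g' (g (h (f z2)))" by simp
    then have "h (f z1) = h (f z2)" using g'g[OF gg] hf_in z by metis
    then have "k (h (f z1)) = k (h (f z2))" by simp
    moreover have "f z1 \<in> K" "f z2 \<in> K" using fim z by auto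
    ultimately have "f z1 = f z2" using khK by metis
    then show "z1 = z2" using injf z by (auto simp: inj_on_def)
  qed
  have "DIM(real \<times> real) \<le> DIM(real)"
    by (rule no_embedding_sphere_lowdim[OF conte inje]) simp
  then show False by simp
qed




context khk_setting begin

lemma level_circle:
  assumes cc: "closed_curve K" and KU: "K = {x\<in>U. H x = h}" and KV: "K \<subseteq> V"
    and x: "x \<in> K"
  shows "rot t (L x) \<in> L ` K"
proof -
  define y where "y = L x"
  define G where "G = {t. rot t y \<in> L ` K}"
  obtain g where g: "simple_path g" "path_image g = K" using cc by (auto simp: closed_curve_def)
  have cK: "compact K" using g compact_path_image simple_path_imp_path by blast
  have "compact (L ` K)"
    using cK contL KV by (meson compact_continuous_image continuous_on_subset)
  then have clLK: "closed (L ` K)" by (rule compact_imp_closed)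
  have isc: "isCont (\<lambda>t. rot t y) s" for s
    using continuous_rot_t[of UNIV y] by (simp add: continuous_on_eq_continuous_at)
  have "closed ((\<lambda>t. rot t y) -` (L ` K))" by (rule continuous_closed_vimage[OF clLK isc])
  then have "closed G" by (simp add: G_def vimage_def)
  moreover have "open G"
  proof (rule openI)
    fix t assume t: "t \<in> G"
    have "open ((\<lambda>t. rot t y) -` W)"
      by (rule continuous_open_vimage[OF openW isc])
    moreover have "t \<in> (\<lambda>t. rot t y) -` W" using t KV by (auto simp: G_def W_def)
    ultimately obtain d where d: "d > 0" "ball t d \<subseteq> (\<lambda>t. rot t y) -` W"
      by (meson open_contains_ball)
    have "ball t d \<subseteq> G"
    proof
      fix s assume s: "s \<in> ball t d"
      have "closed_segment t s \<subseteq> ball t d"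
        by (rule closed_segment_subset) (use s d in auto)
      then have "\<forall>r\<in>closed_segment t s. rot r y \<in> W" using d by auto
      then have eq: "H (Li (rot t y)) = H (Li (rot s y))" by (rule flow_seg)
      obtain x' where x': "x' \<in> K" "rot t y = L x'" using t by (auto simp: G_def)
      have "H (Li (rot t y)) = h" using x' KV KU by auto
      moreover have ws: "rot s y \<in> W" using s d by auto
      moreover have "Li (rot s y) \<in> U" using Li_in[OF ws] VU by blast
      ultimately have "Li (rot s y) \<in> K" using eq KU by auto
      moreover have "rot s y = L (Li (rot s y))" using ws by simp
      ultimately show "s \<in> G" unfolding G_def by blast
    qed
    then show "\<exists>e>0. ball t e \<subseteq> G" using d by blast
  qed
  moreover have "0 \<in> G" using x by (simp add: G_def y_def)
  ultimately have "G = UNIV" using clopen by blast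
  then show ?thesis by (auto simp: G_def y_def)
qed

lemma partC:
  assumes cc: "closed_curve K" and KU: "K = {x\<in>U. H x = h}" and KV: "K \<subseteq> V"
  shows "\<exists>\<phi> \<psi>. homeomorphism K (sphere 0 1) \<phi> \<psi> \<and>
           (\<forall>x\<in>K. \<phi> (pseudo_khk L V \<omega> \<epsilon> x) = rot (\<theta> \<epsilon>) (\<phi> x))"
proof -
  obtain g where g: "simple_path g" "pathfinish g = pathstart g" "path_image g = K"
    using cc by (auto simp: closed_curve_def)
  have homK: "K homeomorphic sphere (0::complex) 1"
    using homeomorphic_simple_path_image_circle[OF g(1) g(2), of 1 0] g(3) by simp
  have g0: "g 0 \<in> K" and g1: "g (1/2) \<in> K" using g(3) by (auto simp: path_image_def)
  have lf: "loop_free g" using g(1) by (simp add: simple_path_def)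
  have i01: "(0::real) \<in> {0..1}" "(1/2::real) \<in> {0..1}" by auto
  have "g 0 = g (1/2) \<longrightarrow> (0::real) = 1/2 \<or> (0::real) = 0 \<and> (1/2::real) = 1 \<or> (0::real) = 1 \<and> (1/2::real) = 0"
    using lf unfolding loop_free_def using i01 by blast
  then have gne: "g 0 \<noteq> g (1/2)" by simp
  have "L (g 0) \<noteq> 0 \<or> L (g (1/2)) \<noteq> 0"
  proof (rule ccontr)
    assume "\<not> (L (g 0) \<noteq> 0 \<or> L (g (1/2)) \<noteq> 0)"
    then have "L (g 0) = L (g (1/2))" by simp
    moreover have "g 0 \<in> V" "g (1/2) \<in> V" using g0 g1 KV by auto
    ultimately have "g 0 = g (1/2)" using injL by (simp add: inj_on_def)
    then show False using gne by simp
  qed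
  then obtain x0 where x0: "x0 \<in> K" "L x0 \<noteq> 0" using g0 g1 by blast
  define r where "r = norm (L x0)"
  have r: "r > 0" using x0 by (simp add: r_def)
  define \<psi> where "\<psi> = (\<lambda>z. Li (r *\<^sub>R z))"
  define \<phi> where "\<phi> = (\<lambda>x. (1 / r) *\<^sub>R L x)"
  have rz: "r *\<^sub>R z \<in> L ` K" if z: "z \<in> sphere 0 1" for z
  proof -
    have "norm (r *\<^sub>R z) = norm (L x0)" using z r by (simp add: r_def)
    then obtain t where "r *\<^sub>R z = rot t (L x0)" using rot_surj by blast
    then show ?thesis using level_circle[OF cc KU KV x0(1)] by simp
  qed
  have LKW: "L ` K \<subseteq> W" using KV by (auto simp: W_def)
  have psi_in: "\<psi> z \<in> K" if "z \<in> sphere 0 1" for z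
    using rz[OF that] KV by (auto simp: \<psi>_def subset_eq)
  have contpsi: "continuous_on (sphere 0 1) \<psi>"
    unfolding \<psi>_def
    by (rule continuous_on_compose2[OF contLi]) (use rz LKW in \<open>auto intro!: continuous_intros\<close>)
  have injpsi: "inj_on \<psi> (sphere 0 1)"
  proof (rule inj_onI)
    fix z1 z2 assume z: "z1 \<in> sphere 0 1" "z2 \<in> sphere 0 1" "\<psi> z1 = \<psi> z2"
    moreover have "r *\<^sub>R z1 \<in> W" "r *\<^sub>R z2 \<in> W" using rz[OF z(1)] rz[OF z(2)] LKW by auto
    ultimately have "r *\<^sub>R z1 = r *\<^sub>R z2"
      using Li_inj unfolding \<psi>_def inj_on_def by blast
    then show "z1 = z2" using r by simp
  qed
  have img: "\<psi> ` sphere 0 1 = K"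
    by (rule circle_fill[OF homK contpsi injpsi]) (use psi_in in auto)
  have hom: "homeomorphism K (sphere 0 1) \<phi> \<psi>"
  proof (rule homeomorphismI)
    show "continuous_on K \<phi>" unfolding \<phi>_def
      by (intro continuous_intros continuous_on_subset[OF contL KV])
    show "continuous_on (sphere 0 1) \<psi>" by (rule contpsi)
    show psiphi: "\<psi> (\<phi> x) = x" if "x \<in> K" for x
      using that KV r by (auto simp: \<psi>_def \<phi>_def)
    show phipsi: "\<phi> (\<psi> z) = z" if "z \<in> sphere 0 1" for z
    proof -
      have "r *\<^sub>R z \<in> W" using rz[OF that] LKW by blast
      then have "L (\<psi> z) = r *\<^sub>R z" by (simp add: \<psi>_def)
      then show ?thesis using r by (simp add: \<phi>_def)
    qed
    show "\<psi> ` sphere 0 1 \<subseteq> K" using img by simp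
    show "\<phi> ` K \<subseteq> sphere 0 1"
    proof
      fix w assume "w \<in> \<phi> ` K"
      then obtain x where x: "x \<in> K" "w = \<phi> x" by auto
      then obtain z where z: "z \<in> sphere 0 1" "x = \<psi> z" using img by auto
      then show "w \<in> sphere 0 1" using x phipsi by simp
    qed
  qed
  moreover have "\<forall>x\<in>K. \<phi> (pseudo_khk L V \<omega> \<epsilon> x) = rot (\<theta> \<epsilon>) (\<phi> x)"
  proof
    fix x assume x: "x \<in> K"
    have "rot (\<theta> \<epsilon>) (L x) \<in> W" using level_circle[OF cc KU KV x] LKW by auto
    then have "\<phi> (pseudo_khk L V \<omega> \<epsilon> x) = (1 / r) *\<^sub>R rot (\<theta> \<epsilon>) (L x)"
      by (simp add: F_eq \<phi>_def)
    also have "\<dots> = rot (\<theta> \<epsilon>) (\<phi> x)"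
      unfolding \<phi>_def by (simp add: linear_rot linear_cmul)
    finally show "\<phi> (pseudo_khk L V \<omega> \<epsilon> x) = rot (\<theta> \<epsilon>) (\<phi> x)" .
  qed
  ultimately show ?thesis by blast
qed

end



lemma lborel_prod_real: "(lborel :: (real \<times> real) measure) = lborel \<Otimes>\<^sub>M lborel"
  by (rule lborel_prod[symmetric])

lemma sets_lborel_pair_real: "sets (lborel \<Otimes>\<^sub>M lborel :: (real \<times> real) measure) = sets borel"
  by (metis lborel_prod_real sets_lborel)

lemma shear_x_lborel:
  "distr lborel borel (\<lambda>(u::real, v::real). (u + c * v, v)) = (lborel :: (real \<times> real) measure)"
proof (rule measure_eqI)
  show "sets (distr lborel borel (\<lambda>(u::real, v::real). (u + c * v, v))) = sets (lborel :: (real \<times> real) measure)"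
    by simp
next
  fix A :: "(real \<times> real) set"
  assume "A \<in> sets (distr lborel borel (\<lambda>(u::real, v::real). (u + c * v, v)))"
  then have A0: "A \<in> sets borel" by simp
  then have A: "A \<in> sets (lborel \<Otimes>\<^sub>M lborel)" unfolding sets_lborel_pair_real .
  let ?S = "\<lambda>(u::real, v::real). (u + c * v, v)"
  have mS: "?S \<in> borel_measurable borel"
    by (rule borel_measurable_continuous_onI) (simp add: case_prod_unfold continuous_intros)
  have SA: "?S -` A \<in> sets (lborel \<Otimes>\<^sub>M lborel)"
    unfolding sets_lborel_pair_real using measurable_sets[OF mS A0] by simp
  have "emeasure (distr lborel borel ?S) A = emeasure lborel (?S -` A)"
    using A0 by (simp add: emeasure_distr mS)
  also have "\<dots> = emeasure (lborel \<Otimes>\<^sub>M lborel) (?S -` A)" by (simp flip: lborel_prod_real)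
  also have "\<dots> = (\<integral>\<^sup>+y. emeasure lborel ((\<lambda>x. (x, y)) -` (?S -` A)) \<partial>lborel)"
    by (rule lborel_pair.emeasure_pair_measure_alt2[OF SA])
  also have "\<dots> = (\<integral>\<^sup>+y. emeasure lborel ((\<lambda>x. (x, y)) -` A) \<partial>lborel)"
  proof (rule nn_integral_cong)
    fix y :: real
    have fib: "(\<lambda>x. (x, y)) -` A \<in> sets lborel" using sets_Pair2[OF A] by simp
    have "(\<lambda>x. (x, y)) -` (?S -` A) = ((+) (c * y)) -` ((\<lambda>x. (x, y)) -` A)"
      by (auto simp: add.commute)
    also have "emeasure lborel \<dots> = emeasure (distr lborel borel ((+) (c * y))) ((\<lambda>x. (x, y)) -` A)"
      using fib by (simp add: emeasure_distr)
    also have "\<dots> = emeasure lborel ((\<lambda>x. (x, y)) -` A)" by (simp add: lborel_distr_plus)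
    finally show "emeasure lborel ((\<lambda>x. (x, y)) -` (?S -` A)) = emeasure lborel ((\<lambda>x. (x, y)) -` A)" .
  qed
  also have "\<dots> = emeasure (lborel \<Otimes>\<^sub>M lborel) A"
    by (rule lborel_pair.emeasure_pair_measure_alt2[OF A, symmetric])
  also have "\<dots> = emeasure lborel A" by (simp flip: lborel_prod_real)
  finally show "emeasure (distr lborel borel ?S) A = emeasure lborel A" .
qed

lemma shear_y_lborel:
  "distr lborel borel (\<lambda>(u::real, v::real). (u, v + c * u)) = (lborel :: (real \<times> real) measure)"
proof (rule measure_eqI)
  show "sets (distr lborel borel (\<lambda>(u::real, v::real). (u, v + c * u))) = sets (lborel :: (real \<times> real) measure)"
    by simp
next
  fix A :: "(real \<times> real) set"
  assume "A \<in> sets (distr lborel borel (\<lambda>(u::real, v::real). (u, v + c * u)))"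
  then have A0: "A \<in> sets borel" by simp
  then have A: "A \<in> sets (lborel \<Otimes>\<^sub>M lborel)" unfolding sets_lborel_pair_real .
  let ?S = "\<lambda>(u::real, v::real). (u, v + c * u)"
  have mS: "?S \<in> borel_measurable borel"
    by (rule borel_measurable_continuous_onI) (simp add: case_prod_unfold continuous_intros)
  have SA: "?S -` A \<in> sets (lborel \<Otimes>\<^sub>M lborel)"
    unfolding sets_lborel_pair_real using measurable_sets[OF mS A0] by simp
  have "emeasure (distr lborel borel ?S) A = emeasure lborel (?S -` A)"
    using A0 by (simp add: emeasure_distr mS)
  also have "\<dots> = emeasure (lborel \<Otimes>\<^sub>M lborel) (?S -` A)" by (simp flip: lborel_prod_real)
  also have "\<dots> = (\<integral>\<^sup>+x. emeasure lborel (Pair x -` (?S -` A)) \<partial>lborel)"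
    by (rule lborel.emeasure_pair_measure_alt[OF SA])
  also have "\<dots> = (\<integral>\<^sup>+x. emeasure lborel (Pair x -` A) \<partial>lborel)"
  proof (rule nn_integral_cong)
    fix x :: real
    have fib: "Pair x -` A \<in> sets lborel" using sets_Pair1[OF A] by simp
    have "Pair x -` (?S -` A) = ((+) (c * x)) -` (Pair x -` A)"
      by (auto simp: add.commute)
    also have "emeasure lborel \<dots> = emeasure (distr lborel borel ((+) (c * x))) (Pair x -` A)"
      using fib by (simp add: emeasure_distr)
    also have "\<dots> = emeasure lborel (Pair x -` A)" by (simp add: lborel_distr_plus)
    finally show "emeasure lborel (Pair x -` (?S -` A)) = emeasure lborel (Pair x -` A)" .
  qed
  also have "\<dots> = emeasure (lborel \<Otimes>\<^sub>M lborel) A"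
    by (rule lborel.emeasure_pair_measure_alt[OF A, symmetric])
  also have "\<dots> = emeasure lborel A" by (simp flip: lborel_prod_real)
  finally show "emeasure (distr lborel borel ?S) A = emeasure lborel A" .
qed



definition "shx c = (\<lambda>(u::real, v::real). (u + c * v, v))"
definition "shy c = (\<lambda>(u::real, v::real). (u, v + c * u))"

lemma Phi_shears:
  "Phi_L \<omega> \<epsilon> = shx (- (\<epsilon> * \<omega>)) \<circ> shy (2 * (\<epsilon> * \<omega>) / ((\<epsilon> * \<omega>)\<^sup>2 + 1)) \<circ> shx (- (\<epsilon> * \<omega>))"
proof (rule ext)
  fix y :: "real \<times> real"
  obtain u v where y: "y = (u, v)" by (cases y)
  define a where "a = \<epsilon> * \<omega>"
  have d: "a\<^sup>2 + 1 \<noteq> 0" using zero_le_power2[of a] by linarith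
  have "Phi_L \<omega> \<epsilon> y = (((1 - a\<^sup>2) * u - 2 * a * v) / (a\<^sup>2 + 1), (2 * a * u + (1 - a\<^sup>2) * v) / (a\<^sup>2 + 1))"
    by (simp add: Phi_L_def y a_def power_mult_distrib mult.assoc)
  also have "\<dots> = (shx (- a) \<circ> shy (2 * a / (a\<^sup>2 + 1)) \<circ> shx (- a)) y"
    using d by (simp add: shx_def shy_def y field_simps power2_eq_square) (simp add: algebra_simps)?
  finally show "Phi_L \<omega> \<epsilon> y = (shx (- (\<epsilon> * \<omega>)) \<circ> shy (2 * (\<epsilon> * \<omega>) / ((\<epsilon> * \<omega>)\<^sup>2 + 1)) \<circ> shx (- (\<epsilon> * \<omega>))) y"
    by (simp add: a_def)
qed

lemma shx_meas: "shx c \<in> borel_measurable borel"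
  unfolding shx_def by (rule borel_measurable_continuous_onI) (simp add: case_prod_unfold continuous_intros)
lemma shy_meas: "shy c \<in> borel_measurable borel"
  unfolding shy_def by (rule borel_measurable_continuous_onI) (simp add: case_prod_unfold continuous_intros)

lemma distr_shx: "distr lborel borel (shx c) = lborel"
  unfolding shx_def by (rule shear_x_lborel)
lemma distr_shy: "distr lborel borel (shy c) = lborel"
  unfolding shy_def by (rule shear_y_lborel)

lemma distr_comp_inv:
  fixes f g :: "real \<times> real \<Rightarrow> real \<times> real"
  assumes f: "f \<in> borel_measurable borel" and g: "g \<in> borel_measurable borel"
    and df: "distr lborel borel f = lborel" and dg: "distr lborel borel g = lborel"
  shows "distr lborel borel (f \<circ> g) = lborel"
proof -
  have g': "g \<in> lborel \<rightarrow>\<^sub>M borel" using g by simp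
  have f': "f \<in> borel \<rightarrow>\<^sub>M borel" using f by simp
  have "distr lborel borel (f \<circ> g) = distr (distr lborel borel g) borel f"
    by (rule distr_distr[OF f' g', symmetric])
  also have "\<dots> = lborel" using dg df by simp
  finally show ?thesis .
qed

lemma shxy_meas: "shx c \<circ> shy d \<in> borel_measurable borel"
  by (rule measurable_comp[OF shy_meas shx_meas])

lemma Phi_meas: "Phi_L \<omega> \<epsilon> \<in> borel_measurable borel"
  unfolding Phi_shears by (rule measurable_comp[OF shx_meas shxy_meas])

lemma distr_Phi: "distr lborel borel (Phi_L \<omega> \<epsilon>) = lborel"
  unfolding Phi_shears
  by (intro distr_comp_inv shx_meas shy_meas distr_shx distr_shy shxy_meas)

lemma lebesgue_invariant:
  fixes T :: "real \<times> real \<Rightarrow> real \<times> real"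
  assumes T: "T \<in> borel_measurable borel" and dT: "distr lborel borel T = lborel"
  shows "T \<in> lebesgue \<rightarrow>\<^sub>M lebesgue" and "distr lebesgue lebesgue T = lebesgue"
proof -
  have Tl: "T \<in> lborel \<rightarrow>\<^sub>M lborel" using T by simp
  have d1: "distr lebesgue lborel T = lborel"
  proof -
    have "distr lebesgue lborel T = distr lborel lborel T" by (rule distr_completion[OF Tl])
    also have "\<dots> = distr lborel borel T" by (rule distr_cong) auto
    finally show ?thesis using dT by simp
  qed
  have Tl2: "T \<in> lebesgue \<rightarrow>\<^sub>M lborel" using Tl by (rule measurable_completion)
  show "T \<in> lebesgue \<rightarrow>\<^sub>M lebesgue"
    using completion.measurable_completion2[OF Tl2] d1 by simp
  have "completion (distr lebesgue lborel T) = distr lebesgue lebesgue T"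
    by (rule completion.completion_distr_eq[OF Tl2]) (simp add: d1)
  then show "distr lebesgue lebesgue T = lebesgue" using d1 by simp
qed




lemma open_lebesgue: "open S \<Longrightarrow> S \<in> sets lebesgue"
  by (simp add: borel_open)

lemma sigma_finite_lebesgue: "sigma_finite_measure (lebesgue :: (real \<times> real) measure)"
proof (unfold sigma_finite_measure_def, intro exI conjI)
  let ?A = "range (\<lambda>n::nat. cball (0::real \<times> real) (real n))"
  show "countable ?A" by simp
  show "?A \<subseteq> sets lebesgue" by (auto simp: borel_closed)
  show "\<Union> ?A = space lebesgue"
  proof -
    have "x \<in> \<Union> ?A" for x :: "real \<times> real"
    proof -
      obtain n :: nat where "norm x \<le> real n" using real_arch_simple by blast
      then show ?thesis by auto
    qed
    then show ?thesis by auto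
  qed
  show "\<forall>a\<in>?A. emeasure lebesgue a \<noteq> \<infinity>"
    using emeasure_lborel_cball_finite by (auto simp: less_top)
qed

context khk_setting begin

definition "Wc = {w :: real \<times> real. \<forall>y. norm y = norm w \<longrightarrow> y \<in> W}"

lemma D_eq: "khk_domain L V = {x\<in>V. L x \<in> Wc}"
  by (auto simp: khk_domain_def Wc_def W_def)

lemma Wc_W: "Wc \<subseteq> W" by (auto simp: Wc_def)

lemma Wc_norm: "w \<in> Wc \<Longrightarrow> norm w' = norm w \<Longrightarrow> w' \<in> Wc"
  by (auto simp: Wc_def)

lemma D_V: "khk_domain L V \<subseteq> V" by (auto simp: D_eq)

lemma L_D: "L ` khk_domain L V = Wc"
proof
  show "L ` khk_domain L V \<subseteq> Wc" by (auto simp: D_eq)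
  show "Wc \<subseteq> L ` khk_domain L V"
  proof
    fix w assume w: "w \<in> Wc"
    then have wW: "w \<in> W" using Wc_W by auto
    then have "Li w \<in> khk_domain L V" using w Li_in by (simp add: D_eq)
    moreover have "w = L (Li w)" using wW by simp
    ultimately show "w \<in> L ` khk_domain L V" by blast
  qed
qed

lemma Li_Wc:
  assumes w: "w \<in> Wc" shows "Li w \<in> khk_domain L V"
proof -
  have wW: "w \<in> W" using w Wc_W by blast
  then have "Li w \<in> V" by (rule Li_in)
  moreover have "L (Li w) \<in> Wc" using wW w by simp
  ultimately show ?thesis by (simp add: D_eq)
qed

lemma open_Wc: "open Wc"
proof (rule openI)
  fix w assume w: "w \<in> Wc"
  let ?S = "sphere (0::real \<times> real) (norm w)"
  have "?S \<subseteq> W" using w by (auto simp: Wc_def)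
  then have disj: "?S \<inter> (- W) = {}" by blast
  have "compact ?S" by simp
  moreover have "closed (- W)" using openW by (simp add: closed_Compl)
  ultimately obtain d where d: "d > 0" "\<forall>x\<in>?S. \<forall>y\<in>- W. d \<le> dist x y"
    using separate_compact_closed[OF _ _ disj] by metis
  have "ball w d \<subseteq> Wc"
  proof
    fix w' assume w': "w' \<in> ball w d"
    have nd: "\<bar>norm w' - norm w\<bar> < d"
      using w' norm_triangle_ineq3[of w w'] by (simp add: dist_norm norm_minus_commute)
    show "w' \<in> Wc" unfolding Wc_def mem_Collect_eq
    proof (intro allI impI)
      fix y :: "real \<times> real" assume y: "norm y = norm w'"
      obtain x where x: "x \<in> ?S" "dist x y < d"
      proof (cases "y = 0")
        case True
        let ?x = "(norm w, 0::real)"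
        have "?x \<in> ?S" by simp
        moreover have "dist ?x y < d" using True nd y by simp
        ultimately show ?thesis using that by blast
      next
        case False
        let ?x = "(norm w / norm y) *\<^sub>R y"
        have "?x \<in> ?S" using False by simp
        moreover have "dist ?x y = \<bar>norm w - norm y\<bar>"
        proof -
          have "?x - y = (norm w / norm y - 1) *\<^sub>R y" by (simp add: algebra_simps)
          then have "dist ?x y = \<bar>norm w / norm y - 1\<bar> * norm y" by (simp add: dist_norm)
          also have "\<dots> = \<bar>norm w - norm y\<bar>"
            using False by (simp add: abs_mult[symmetric] diff_divide_distrib[symmetric] field_simps)
          finally show ?thesis .
        qed
        then have "dist ?x y < d" using nd y by simp
        ultimately show ?thesis using that by blast
      qed
      show "y \<in> W"
      proof (rule ccontr)
        assume "y \<notin> W"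
        then have "d \<le> dist x y" using d x by auto
        then show False using x by simp
      qed
    qed
  qed
  then show "\<exists>e>0. ball w e \<subseteq> Wc" using d by blast
qed

lemma open_D: "open (khk_domain L V)"
proof -
  have "khk_domain L V = V \<inter> L -` Wc" by (auto simp: D_eq)
  then show ?thesis using continuous_open_preimage[OF contL openV open_Wc] by simp
qed

lemma L_image_meas: "A \<in> sets lebesgue \<Longrightarrow> A \<subseteq> V \<Longrightarrow> L ` A \<in> sets lebesgue"
  by (rule differentiable_image_in_sets_lebesgue) (auto intro: differentiable_on_subset[OF diffL])

lemma Li_image_meas: "B \<in> sets lebesgue \<Longrightarrow> B \<subseteq> W \<Longrightarrow> Li ` B \<in> sets lebesgue"
  by (rule differentiable_image_in_sets_lebesgue) (auto intro: differentiable_on_subset[OF diffLi])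

lemma L_image_null: "A \<in> null_sets lebesgue \<Longrightarrow> A \<subseteq> V \<Longrightarrow> L ` A \<in> null_sets lebesgue"
  unfolding negligible_iff_null_sets[symmetric]
  by (rule negligible_differentiable_image_negligible) (auto intro: differentiable_on_subset[OF diffL])

lemma Li_image_null: "B \<in> null_sets lebesgue \<Longrightarrow> B \<subseteq> W \<Longrightarrow> Li ` B \<in> null_sets lebesgue"
  unfolding negligible_iff_null_sets[symmetric]
  by (rule negligible_differentiable_image_negligible) (auto intro: differentiable_on_subset[OF diffLi])

lemma pre_eq: "Li -` A \<inter> Wc = L ` (A \<inter> khk_domain L V)"
proof
  show "Li -` A \<inter> Wc \<subseteq> L ` (A \<inter> khk_domain L V)"
  proof
    fix w assume w: "w \<in> Li -` A \<inter> Wc"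
    then have "Li w \<in> A \<inter> khk_domain L V" using Li_Wc by auto
    moreover have "w = L (Li w)" using w Wc_W by auto
    ultimately show "w \<in> L ` (A \<inter> khk_domain L V)" by blast
  qed
  show "L ` (A \<inter> khk_domain L V) \<subseteq> Li -` A \<inter> Wc"
  proof
    fix w assume "w \<in> L ` (A \<inter> khk_domain L V)"
    then obtain x where x: "x \<in> A" "x \<in> khk_domain L V" "w = L x" by auto
    then have "x \<in> V" "L x \<in> Wc" by (auto simp: D_eq)
    then show "w \<in> Li -` A \<inter> Wc" using x by simp
  qed
qed

definition "Nm = distr (restrict_space lebesgue Wc) lebesgue Li"

lemma Wc_leb: "Wc \<in> sets lebesgue" by (rule open_lebesgue[OF open_Wc])
lemma D_leb: "khk_domain L V \<in> sets lebesgue" by (rule open_lebesgue[OF open_D])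

lemma Li_meas: "Li \<in> restrict_space lebesgue Wc \<rightarrow>\<^sub>M lebesgue"
proof (rule measurableI)
  fix x :: "real \<times> real" assume "x \<in> space (restrict_space lebesgue Wc)"
  then show "Li x \<in> space lebesgue" by simp
next
  fix A :: "(real \<times> real) set" assume A: "A \<in> sets lebesgue"
  have "Li -` A \<inter> space (restrict_space lebesgue Wc) = L ` (A \<inter> khk_domain L V)"
    using pre_eq by (simp add: space_restrict_space)
  moreover have "L ` (A \<inter> khk_domain L V) \<in> sets lebesgue"
    using A D_leb D_V by (intro L_image_meas) auto
  moreover have "L ` (A \<inter> khk_domain L V) \<subseteq> Wc" using L_D by auto
  ultimately show "Li -` A \<inter> space (restrict_space lebesgue Wc) \<in> sets (restrict_space lebesgue Wc)"
    using Wc_leb by (simp add: sets_restrict_space_iff)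
qed

lemma sets_Nm: "sets Nm = sets lebesgue" by (simp add: Nm_def)

lemma Nm_eq:
  assumes A: "A \<in> sets lebesgue"
  shows "emeasure Nm A = emeasure lebesgue (L ` (A \<inter> khk_domain L V))"
proof -
  have "emeasure Nm A = emeasure (restrict_space lebesgue Wc) (Li -` A \<inter> space (restrict_space lebesgue Wc))"
    unfolding Nm_def by (rule emeasure_distr[OF Li_meas A])
  also have "Li -` A \<inter> space (restrict_space lebesgue Wc) = L ` (A \<inter> khk_domain L V)"
    using pre_eq by (simp add: space_restrict_space)
  also have "emeasure (restrict_space lebesgue Wc) (L ` (A \<inter> khk_domain L V)) = emeasure lebesgue (L ` (A \<inter> khk_domain L V))"
    using L_D Wc_leb by (intro emeasure_restrict_space) auto
  finally show ?thesis .
qed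

lemma ac_Nm: "absolutely_continuous lebesgue Nm"
  unfolding absolutely_continuous_def
proof
  fix A :: "(real \<times> real) set" assume A: "A \<in> null_sets lebesgue"
  have "A \<inter> khk_domain L V \<in> null_sets lebesgue"
    using A D_leb by (metis null_set_Int1 null_set_Int2)
  then have "L ` (A \<inter> khk_domain L V) \<in> null_sets lebesgue"
    using D_V by (intro L_image_null) auto
  moreover have As: "A \<in> sets lebesgue" using A by (simp add: null_sets_def)
  ultimately have "emeasure Nm A = 0" by (simp add: Nm_eq[OF As] null_setsD1)
  then show "A \<in> null_sets Nm" using A sets_Nm by (simp add: null_sets_def)
qed


lemma norm_Phi[simp]: "norm (Phi_L \<omega> \<epsilon> y) = norm y"
  by (simp add: Phi_eq)

lemma F_Phi: "pseudo_khk L V \<omega> \<epsilon> x = Li (Phi_L \<omega> \<epsilon> (L x))"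
  by (simp add: pseudo_khk_def Li_def)

lemma Phi_leb:
  assumes B: "B \<in> sets lebesgue"
  shows "Phi_L \<omega> \<epsilon> -` B \<in> sets lebesgue"
    and "emeasure lebesgue (Phi_L \<omega> \<epsilon> -` B) = emeasure lebesgue B"
proof -
  note inv = lebesgue_invariant[OF Phi_meas distr_Phi]
  show "Phi_L \<omega> \<epsilon> -` B \<in> sets lebesgue"
    using measurable_sets[OF inv(1) B] by simp
  have "emeasure lebesgue B = emeasure (distr lebesgue lebesgue (Phi_L \<omega> \<epsilon>)) B"
    using inv(2) by simp
  also have "\<dots> = emeasure lebesgue (Phi_L \<omega> \<epsilon> -` B \<inter> space lebesgue)"
    by (rule emeasure_distr[OF inv(1) B])
  finally show "emeasure lebesgue (Phi_L \<omega> \<epsilon> -` B) = emeasure lebesgue B" by simp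
qed

lemma L_pre:
  assumes AD: "A \<subseteq> khk_domain L V"
  shows "L ` {x\<in>khk_domain L V. pseudo_khk L V \<omega> \<epsilon> x \<in> A} = Phi_L \<omega> \<epsilon> -` (L ` A)"
proof
  show "L ` {x\<in>khk_domain L V. pseudo_khk L V \<omega> \<epsilon> x \<in> A} \<subseteq> Phi_L \<omega> \<epsilon> -` (L ` A)"
  proof
    fix w assume "w \<in> L ` {x\<in>khk_domain L V. pseudo_khk L V \<omega> \<epsilon> x \<in> A}"
    then obtain x where x: "x \<in> khk_domain L V" "Li (Phi_L \<omega> \<epsilon> (L x)) \<in> A" "w = L x"
      by (auto simp: F_Phi)
    have "L x \<in> Wc" using x(1) by (simp add: D_eq)
    then have "Phi_L \<omega> \<epsilon> (L x) \<in> Wc" by (rule Wc_norm) simp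
    then have "Phi_L \<omega> \<epsilon> (L x) = L (Li (Phi_L \<omega> \<epsilon> (L x)))" using Wc_W by auto
    then show "w \<in> Phi_L \<omega> \<epsilon> -` (L ` A)" using x by auto
  qed
  show "Phi_L \<omega> \<epsilon> -` (L ` A) \<subseteq> L ` {x\<in>khk_domain L V. pseudo_khk L V \<omega> \<epsilon> x \<in> A}"
  proof
    fix w assume "w \<in> Phi_L \<omega> \<epsilon> -` (L ` A)"
    then obtain a where a: "a \<in> A" "Phi_L \<omega> \<epsilon> w = L a" by auto
    have aD: "a \<in> khk_domain L V" using a AD by auto
    then have "L a \<in> Wc" by (simp add: D_eq)
    then have wWc: "w \<in> Wc" using a(2) by (metis Wc_norm norm_Phi)
    define x where "x = Li w"
    have xD: "x \<in> khk_domain L V" using Li_Wc[OF wWc] by (simp add: x_def)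
    have Lx: "L x = w" using wWc Wc_W by (auto simp: x_def)
    have "pseudo_khk L V \<omega> \<epsilon> x = a"
      using Lx a aD D_V by (auto simp: F_Phi)
    then show "w \<in> L ` {x\<in>khk_domain L V. pseudo_khk L V \<omega> \<epsilon> x \<in> A}"
      using xD Lx a by force
  qed
qed

lemma Nm_invariant:
  fixes \<epsilon> :: real
  assumes A: "A \<in> sets lebesgue" and AD: "A \<subseteq> khk_domain L V"
  defines "A' \<equiv> {x\<in>khk_domain L V. pseudo_khk L V \<omega> \<epsilon> x \<in> A}"
  shows "A' \<in> sets lebesgue" and "emeasure Nm A' = emeasure Nm A"
proof -
  have LA: "L ` A \<in> sets lebesgue" using A AD D_V by (intro L_image_meas) auto
  have LA': "L ` A' = Phi_L \<omega> \<epsilon> -` (L ` A)" unfolding A'_def by (rule L_pre[OF AD])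
  have A'D: "A' \<subseteq> khk_domain L V" by (auto simp: A'_def)
  have "A' = Li ` (L ` A')"
  proof -
    have "\<forall>x\<in>A'. Li (L x) = x" using A'D D_V by auto
    then show ?thesis by (simp add: image_image)
  qed
  moreover have "L ` A' \<subseteq> W" using A'D D_V by (auto simp: W_def)
  ultimately show A'm: "A' \<in> sets lebesgue"
    using Li_image_meas Phi_leb(1)[OF LA] LA' by metis
  have "emeasure Nm A' = emeasure lebesgue (L ` A')"
    using Nm_eq[OF A'm] A'D by (simp add: Int_absorb2)
  also have "\<dots> = emeasure lebesgue (L ` A)" unfolding LA' by (rule Phi_leb(2)[OF LA])
  also have "\<dots> = emeasure Nm A" using Nm_eq[OF A] AD by (simp add: Int_absorb2)
  finally show "emeasure Nm A' = emeasure Nm A" .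
qed


lemma partD:
  "\<exists>m :: real \<times> real \<Rightarrow> real. m \<in> borel_measurable lebesgue \<and> (\<forall>x\<in>khk_domain L V. m x > 0) \<and>
     (\<forall>A\<in>sets lebesgue. A \<subseteq> khk_domain L V \<longrightarrow>
        emeasure (density lebesgue (\<lambda>x. ennreal (m x))) {x\<in>khk_domain L V. pseudo_khk L V \<omega> \<epsilon> x \<in> A}
        = emeasure (density lebesgue (\<lambda>x. ennreal (m x))) A)"
proof -
  obtain f where f: "f \<in> borel_measurable lebesgue" and fN: "density lebesgue f = Nm"
    using sigma_finite_measure.Radon_Nikodym[OF sigma_finite_lebesgue ac_Nm sets_Nm] by blast
  have fm: "{x \<in> space lebesgue. f x = c} \<in> sets lebesgue" for c
    using f by measurable
  define E0 where "E0 = {x\<in>khk_domain L V. f x = 0}"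
  have E0m: "E0 \<in> sets lebesgue"
  proof -
    have "E0 = khk_domain L V \<inter> {x \<in> space lebesgue. f x = 0}" by (auto simp: E0_def)
    then show ?thesis using D_leb fm by auto
  qed
  have "emeasure Nm E0 = (\<integral>\<^sup>+x. f x * indicator E0 x \<partial>lebesgue)"
    unfolding fN[symmetric] by (rule emeasure_density[OF f E0m])
  also have "\<dots> = (\<integral>\<^sup>+x. 0 \<partial>(lebesgue :: (real \<times> real) measure))"
    by (rule nn_integral_cong) (auto simp: E0_def indicator_def)
  finally have "emeasure Nm E0 = 0" by simp
  then have "emeasure lebesgue (L ` E0) = 0"
    using Nm_eq[OF E0m] by (simp add: E0_def Int_absorb2)
  moreover have "L ` E0 \<in> sets lebesgue"
    using E0m D_V by (intro L_image_meas) (auto simp: E0_def)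
  ultimately have LE0: "L ` E0 \<in> null_sets lebesgue" by (simp add: null_sets_def)
  have "E0 = Li ` (L ` E0)"
  proof -
    have "\<forall>x\<in>E0. Li (L x) = x" using D_V by (auto simp: E0_def)
    then show ?thesis by (simp add: image_image)
  qed
  moreover have "L ` E0 \<subseteq> W" using D_V by (auto simp: E0_def W_def)
  ultimately have E0n: "E0 \<in> null_sets lebesgue" using Li_image_null[OF LE0] by metis
  define Ek where "Ek k = {x\<in>khk_domain L V. f x = \<infinity> \<and> norm (L x) \<le> real k}" for k :: nat
  have Ekn: "Ek k \<in> null_sets lebesgue" for k
  proof -
    have seq: "{x\<in>khk_domain L V. norm (L x) \<le> real k} = Li ` (Wc \<inter> cball 0 (real k))"
    proof
      show "{x\<in>khk_domain L V. norm (L x) \<le> real k} \<subseteq> Li ` (Wc \<inter> cball 0 (real k))"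
      proof
        fix x assume x: "x \<in> {x\<in>khk_domain L V. norm (L x) \<le> real k}"
        then have "L x \<in> Wc \<inter> cball 0 (real k)" "x = Li (L x)" using D_V by (auto simp: D_eq)
        then show "x \<in> Li ` (Wc \<inter> cball 0 (real k))" by blast
      qed
      show "Li ` (Wc \<inter> cball 0 (real k)) \<subseteq> {x\<in>khk_domain L V. norm (L x) \<le> real k}"
        using Li_Wc Wc_W by auto
    qed
    have m1: "{x\<in>khk_domain L V. norm (L x) \<le> real k} \<in> sets lebesgue"
      unfolding seq using Wc_W Wc_leb by (intro Li_image_meas) auto
    have "Ek k = {x\<in>khk_domain L V. norm (L x) \<le> real k} \<inter> {x \<in> space lebesgue. f x = \<infinity>}"
      by (auto simp: Ek_def)
    then have Ekm: "Ek k \<in> sets lebesgue" using m1 fm by auto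
    have "emeasure Nm (Ek k) = (\<integral>\<^sup>+x. f x * indicator (Ek k) x \<partial>lebesgue)"
      unfolding fN[symmetric] by (rule emeasure_density[OF f Ekm])
    also have "\<dots> = (\<integral>\<^sup>+x. \<infinity> * indicator (Ek k) x \<partial>lebesgue)"
      by (rule nn_integral_cong) (auto simp: Ek_def indicator_def)
    also have "\<dots> = \<infinity> * emeasure lebesgue (Ek k)"
      by (rule nn_integral_cmult_indicator[OF Ekm])
    finally have e1: "emeasure Nm (Ek k) = \<infinity> * emeasure lebesgue (Ek k)" .
    have "emeasure Nm (Ek k) = emeasure lebesgue (L ` Ek k)"
      using Nm_eq[OF Ekm] by (simp add: Ek_def Int_absorb2)
    also have "\<dots> \<le> emeasure lebesgue (cball (0::real \<times> real) (real k))"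
    proof (rule emeasure_mono)
      show "L ` Ek k \<subseteq> cball 0 (real k)" by (auto simp: Ek_def)
    qed (simp add: borel_closed)
    also have "\<dots> < \<infinity>" using emeasure_lborel_cball_finite by simp
    finally have "\<infinity> * emeasure lebesgue (Ek k) < \<infinity>" using e1 by simp
    then have "emeasure lebesgue (Ek k) = 0"
      by (auto simp: ennreal_mult_less_top)
    then show ?thesis using Ekm by (simp add: null_sets_def)
  qed
  have Einf: "(\<Union>k. Ek k) \<in> null_sets lebesgue" using Ekn by (rule null_sets_UN)
  have AE: "AE x in lebesgue. x \<in> khk_domain L V \<longrightarrow> f x \<noteq> 0 \<and> f x \<noteq> \<infinity>"
  proof (rule AE_I')
    show "E0 \<union> (\<Union>k. Ek k) \<in> null_sets lebesgue" using E0n Einf by (rule null_sets.Un)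
    show "{x \<in> space lebesgue. \<not> (x \<in> khk_domain L V \<longrightarrow> f x \<noteq> 0 \<and> f x \<noteq> \<infinity>)} \<subseteq> E0 \<union> (\<Union>k. Ek k)"
    proof
      fix x assume x: "x \<in> {x \<in> space lebesgue. \<not> (x \<in> khk_domain L V \<longrightarrow> f x \<noteq> 0 \<and> f x \<noteq> \<infinity>)}"
      obtain k :: nat where "norm (L x) \<le> real k" using real_arch_simple by blast
      then show "x \<in> E0 \<union> (\<Union>k. Ek k)" using x by (auto simp: E0_def Ek_def)
    qed
  qed
  define m where "m x = (if f x = 0 \<or> f x = \<infinity> then 1 else enn2real (f x))" for x
  have mm: "m \<in> borel_measurable lebesgue" unfolding m_def using f by measurable
  have mpos: "m x > 0" for x
    by (auto simp: m_def enn2real_positive_iff less_top zero_less_iff_neq_zero)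
  have dens: "emeasure (density lebesgue (\<lambda>x. ennreal (m x))) B = emeasure Nm B"
    if B: "B \<in> sets lebesgue" "B \<subseteq> khk_domain L V" for B
  proof -
    have "emeasure (density lebesgue (\<lambda>x. ennreal (m x))) B = (\<integral>\<^sup>+x. ennreal (m x) * indicator B x \<partial>lebesgue)"
      by (rule emeasure_density[OF _ B(1)]) (use mm in measurable)
    also have "\<dots> = (\<integral>\<^sup>+x. f x * indicator B x \<partial>lebesgue)"
    proof (rule nn_integral_cong_AE)
      show "AE x in lebesgue. ennreal (m x) * indicator B x = f x * indicator B x"
        using AE
      proof eventually_elim
        case (elim x)
        then show ?case using B(2) by (auto simp: m_def indicator_def ennreal_enn2real less_top)
      qed
    qed
    also have "\<dots> = emeasure Nm B"
      unfolding fN[symmetric] by (rule emeasure_density[OF f B(1), symmetric])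
    finally show ?thesis .
  qed
  have "\<forall>A\<in>sets lebesgue. A \<subseteq> khk_domain L V \<longrightarrow>
        emeasure (density lebesgue (\<lambda>x. ennreal (m x))) {x\<in>khk_domain L V. pseudo_khk L V \<omega> \<epsilon> x \<in> A}
        = emeasure (density lebesgue (\<lambda>x. ennreal (m x))) A"
  proof (intro ballI impI)
    fix A assume A: "A \<in> sets lebesgue" "A \<subseteq> khk_domain L V"
    have "{x\<in>khk_domain L V. pseudo_khk L V \<omega> \<epsilon> x \<in> A} \<subseteq> khk_domain L V" by auto
    then show "emeasure (density lebesgue (\<lambda>x. ennreal (m x))) {x\<in>khk_domain L V. pseudo_khk L V \<omega> \<epsilon> x \<in> A}
        = emeasure (density lebesgue (\<lambda>x. ennreal (m x))) A"
      using dens Nm_invariant[OF A, of \<epsilon>] A by simp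
  qed
  then show ?thesis using mm mpos by blast
qed

end

theorem proposition14:
  fixes X :: "real \<times> real \<Rightarrow> real \<times> real"
    and H :: "real \<times> real \<Rightarrow> real"
    and L :: "real \<times> real \<Rightarrow> real \<times> real"
    and DL :: "real \<times> real \<Rightarrow> real \<times> real \<Rightarrow> real \<times> real"
    and U V :: "(real \<times> real) set" and p :: "real \<times> real" and \<omega> \<epsilon> :: real
  assumes "open U" and "analytic_field X U"
    and "isochronous_center X U p"
    and "first_integral_field H X U"
    and "\<omega> > 0"
    and "p \<in> V" and "V \<subseteq> U" and "local_diffeo L V"
    and "\<forall>x\<in>V. (L has_derivative DL x) (at x) \<and> XL \<omega> (L x) = DL x (X x)"
  shows "(\<forall>x\<in>khk_domain L V. \<exists>DF. (pseudo_khk L V \<omega> \<epsilon> has_derivative DF) (at x)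
              \<and> X (pseudo_khk L V \<omega> \<epsilon> x) = DF (X x))
       \<and> (\<forall>x\<in>khk_domain L V. H (pseudo_khk L V \<omega> \<epsilon> x) = H x)
       \<and> (\<exists>\<rho>::real. \<forall>h. closed_curve {x\<in>U. H x = h} \<and> {x\<in>U. H x = h} \<subseteq> V \<longrightarrow>
            (\<exists>\<phi> \<psi>. homeomorphism {x\<in>U. H x = h} (sphere 0 1) \<phi> \<psi> \<and>
               (\<forall>x\<in>{x\<in>U. H x = h}. \<phi> (pseudo_khk L V \<omega> \<epsilon> x) = rot (2 * pi * \<rho>) (\<phi> x))))
       \<and> (\<exists>m :: real \<times> real \<Rightarrow> real. m \<in> borel_measurable lebesgue \<and> (\<forall>x\<in>khk_domain L V. m x > 0) \<and>
            (\<forall>A\<in>sets lebesgue. A \<subseteq> khk_domain L V \<longrightarrow>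
               emeasure (density lebesgue (\<lambda>x. ennreal (m x))) {x\<in>khk_domain L V. pseudo_khk L V \<omega> \<epsilon> x \<in> A}
               = emeasure (density lebesgue (\<lambda>x. ennreal (m x))) A))"
proof -
  interpret k: khk_setting X H L DL U V \<omega>
    using assms by (unfold_locales) auto
  have a: "\<forall>x\<in>khk_domain L V. \<exists>DF. (pseudo_khk L V \<omega> \<epsilon> has_derivative DF) (at x)
              \<and> X (pseudo_khk L V \<omega> \<epsilon> x) = DF (X x)"
    using k.partA by blast
  have b: "\<forall>x\<in>khk_domain L V. H (pseudo_khk L V \<omega> \<epsilon> x) = H x"
    using k.partB by blast
  have c: "\<exists>\<rho>::real. \<forall>h. closed_curve {x\<in>U. H x = h} \<and> {x\<in>U. H x = h} \<subseteq> V \<longrightarrow>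
            (\<exists>\<phi> \<psi>. homeomorphism {x\<in>U. H x = h} (sphere 0 1) \<phi> \<psi> \<and>
               (\<forall>x\<in>{x\<in>U. H x = h}. \<phi> (pseudo_khk L V \<omega> \<epsilon> x) = rot (2 * pi * \<rho>) (\<phi> x)))"
  proof (rule exI[of _ "k.\<theta> \<epsilon> / (2 * pi)"], intro allI impI)
    fix h assume hh: "closed_curve {x\<in>U. H x = h} \<and> {x\<in>U. H x = h} \<subseteq> V"
    have e: "2 * pi * (k.\<theta> \<epsilon> / (2 * pi)) = k.\<theta> \<epsilon>" by simp
    show "\<exists>\<phi> \<psi>. homeomorphism {x\<in>U. H x = h} (sphere 0 1) \<phi> \<psi> \<and>
               (\<forall>x\<in>{x\<in>U. H x = h}. \<phi> (pseudo_khk L V \<omega> \<epsilon> x) = rot (2 * pi * (k.\<theta> \<epsilon> / (2 * pi))) (\<phi> x))"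
      unfolding e using k.partC[OF conjunct1[OF hh] refl conjunct2[OF hh]] by blast
  qed
  have d: "\<exists>m :: real \<times> real \<Rightarrow> real. m \<in> borel_measurable lebesgue \<and> (\<forall>x\<in>khk_domain L V. m x > 0) \<and>
            (\<forall>A\<in>sets lebesgue. A \<subseteq> khk_domain L V \<longrightarrow>
               emeasure (density lebesgue (\<lambda>x. ennreal (m x))) {x\<in>khk_domain L V. pseudo_khk L V \<omega> \<epsilon> x \<in> A}
               = emeasure (density lebesgue (\<lambda>x. ennreal (m x))) A)"
    by (rule k.partD)
  show ?thesis using a b c d by blast
qed

end
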